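(* Let $(K,d)$ be a compact metric space, let $\gamma=(\gamma_1,\dots,\gamma_n)$ be a system of proper contractions on $K$ such that $K=\bigcup_{i=1}^n\gamma_i(K)$, and let $\varphi:K\to K$ be continuous with $\varphi(\gamma_i(x))=x$ for all $x\in K$ and $i=1,\dots,n$. Assume that $\gamma$ satisfies the open set condition in $K$. Let $A=C(K)$ and let $X=C(K)$ be the Hilbert bimodule over $A$ described in the context, with left action $\phi$. Then for every $a\in J(X)^0$ there exist $m\ge 1$ and $\xi_1,\dots,\xi_m,\eta_1,\dots,\eta_m\in X$ such that \[\sum_{i=1}^m\theta_{\xi_i,\eta_i}=\phi(a).\]
   Context: A continuous map $g:K\to K$ is a proper contraction if there are constants $0<c_1\le c_2<1$ with $c_1d(x,y)\le d(g(x),g(y))\le c_2 d(x,y)$ for all $x,y\in K$. The system $\gamma$ satisfies the open set condition in $K$ if there is a non-empty open set $V\subset K$ with $\bigcup_{i=1}^n\gamma_i(V)\subset V$ and $\gamma_i(V)\cap\gamma_j(V)=\emptyset$ for $i\ne j$. Let $B_\gamma=\{y\in K: y=\gamma_i(x)=\gamma_j(x)\text{ for some }x\in K\text{ and some }i\neq j\}$. The $A$-$A$ bimodule structure on $X=C(K)$ is $(a\cdot\xi\cdot b)(x)=a(x)\xi(x)b(\varphi(x))$ for $a,b\in A$, $\xi\in X$, with $A$-valued inner product $\langle\xi,\eta\rangle_A(x)=\frac1n\sum_{i=1}^n\overline{\xi(\gamma_i(x))}\eta(\gamma_i(x))$; this makes $X$ a Hilbert bimodule (C$^*$-correspondence)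 over $A$. The left action $\phi:A\to\mathcal L(X)$ is $(\phi(a)\xi)(x)=a(x)\xi(x)$. For $\xi,\eta\in X$, $\theta_{\xi,\eta}$ is the operator $\zeta\mapsto\xi\cdot\langle\eta,\zeta\rangle_A$ on $X$. $J(X)^0$ is the set of $a\in A$ that vanish on $B_\gamma$ and whose support is a compact subset of $K\setminus B_\gamma$. *)

theory Defs
  imports "HOL-Analysis.Analysis"
begin

definition proper_contraction :: "'a::metric_space set \<Rightarrow> ('a \<Rightarrow> 'a) \<Rightarrow> bool" where
  "proper_contraction K g \<longleftrightarrow> g ` K \<subseteq> K \<and> continuous_on K g \<and>
     (\<exists>c1 c2::real. 0 < c1 \<and> c1 \<le> c2 \<and> c2 < 1 \<and>
        (\<forall>x\<in>K. \<forall>y\<in>K. c1 * dist x y \<le> dist (g x) (g y) \<and> dist (g x) (g y) \<le> c2 * dist x y))"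

definition open_set_condition :: "'a::metric_space set \<Rightarrow> nat \<Rightarrow> (nat \<Rightarrow> 'a \<Rightarrow> 'a) \<Rightarrow> bool" where
  "open_set_condition K n \<gamma> \<longleftrightarrow> (\<exists>V. V \<noteq> {} \<and> openin (top_of_set K) V \<and>
      (\<Union>i\<in>{1..n}. \<gamma> i ` V) \<subseteq> V \<and>
      (\<forall>i\<in>{1..n}. \<forall>j\<in>{1..n}. i \<noteq> j \<longrightarrow> \<gamma> i ` V \<inter> \<gamma> j ` V = {}))"

definition branch_set :: "'a set \<Rightarrow> nat \<Rightarrow> (nat \<Rightarrow> 'a \<Rightarrow> 'a) \<Rightarrow> 'a set" where
  "branch_set K n \<gamma> = {y\<in>K. \<exists>x\<in>K. \<exists>i\<in>{1..n}. \<exists>j\<in>{1..n}. i \<noteq> j \<and> y = \<gamma> i x \<and> y = \<gamma> j x}"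

definition inner_A :: "nat \<Rightarrow> (nat \<Rightarrow> 'a \<Rightarrow> 'a) \<Rightarrow> ('a \<Rightarrow> complex) \<Rightarrow> ('a \<Rightarrow> complex) \<Rightarrow> 'a \<Rightarrow> complex" where
  "inner_A n \<gamma> \<xi> \<eta> x = (1 / of_nat n) * (\<Sum>i=1..n. cnj (\<xi> (\<gamma> i x)) * \<eta> (\<gamma> i x))"

definition right_act :: "('a \<Rightarrow> 'a) \<Rightarrow> ('a \<Rightarrow> complex) \<Rightarrow> ('a \<Rightarrow> complex) \<Rightarrow> 'a \<Rightarrow> complex" where
  "right_act \<phi> \<xi> b x = \<xi> x * b (\<phi> x)"

definition theta :: "nat \<Rightarrow> (nat \<Rightarrow> 'a \<Rightarrow> 'a) \<Rightarrow> ('a \<Rightarrow> 'a) \<Rightarrow> ('a \<Rightarrow> complex) \<Rightarrow> ('a \<Rightarrow> complex)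
    \<Rightarrow> ('a \<Rightarrow> complex) \<Rightarrow> 'a \<Rightarrow> complex" where
  "theta n \<gamma> \<phi> \<xi> \<eta> \<zeta> = right_act \<phi> \<xi> (inner_A n \<gamma> \<eta> \<zeta>)"

definition left_act :: "('a \<Rightarrow> complex) \<Rightarrow> ('a \<Rightarrow> complex) \<Rightarrow> 'a \<Rightarrow> complex" where
  "left_act a \<xi> x = a x * \<xi> x"

definition J0 :: "'a::metric_space set \<Rightarrow> nat \<Rightarrow> (nat \<Rightarrow> 'a \<Rightarrow> 'a) \<Rightarrow> ('a \<Rightarrow> complex) set" where
  "J0 K n \<gamma> = {a. continuous_on K a \<and> (\<forall>y\<in>branch_set K n \<gamma>. a y = 0) \<and>
      compact (closure {x\<in>K. a x \<noteq> 0}) \<and>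
      closure {x\<in>K. a x \<noteq> 0} \<subseteq> K - branch_set K n \<gamma>}"

end

theory Submission
  imports Defs
begin

lemma finite_min_delta:
  assumes "finite I" "\<forall>i\<in>I. \<exists>d>0. P i d"
    and "\<And>i d d'. P i d \<Longrightarrow> 0 < d' \<Longrightarrow> d' \<le> d \<Longrightarrow> P i d'"
  shows "\<exists>d>(0::real). \<forall>i\<in>I. P i d"
proof -
  from assms(2) obtain f where f: "\<forall>i\<in>I. f i > 0 \<and> P i (f i)" by metis
  define d where "d = Min (insert 1 (f ` I))"
  have fin: "finite (insert 1 (f ` I))" using assms(1) by simp
  have "d > 0" unfolding d_def using fin f by (subst Min_gr_iff) auto
  moreover have "\<forall>i\<in>I. P i d"
  proof
    fix i assume i: "i \<in> I"
    have "d \<le> f i" unfolding d_def using fin i by (intro Min_le) auto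
    then show "P i d" using assms(3) f i \<open>d > 0\<close> by blast
  qed
  ultimately show ?thesis by blast
qed

theorem lemma4p3:
  fixes K :: "'a::metric_space set" and n :: nat and \<gamma> :: "nat \<Rightarrow> 'a \<Rightarrow> 'a"
    and \<phi> :: "'a \<Rightarrow> 'a" and a :: "'a \<Rightarrow> complex"
  assumes "compact K"
    and "\<forall>i\<in>{1..n}. proper_contraction K (\<gamma> i)"
    and "K = (\<Union>i\<in>{1..n}. \<gamma> i ` K)"
    and "continuous_on K \<phi>" and "\<phi> ` K \<subseteq> K"
    and "\<forall>i\<in>{1..n}. \<forall>x\<in>K. \<phi> (\<gamma> i x) = x"
    and "open_set_condition K n \<gamma>"
    and "a \<in> J0 K n \<gamma>"
  shows "\<exists>m::nat. m \<ge> 1 \<and> (\<exists>\<xi> \<eta> :: nat \<Rightarrow> 'a \<Rightarrow> complex.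
           (\<forall>j\<in>{1..m}. continuous_on K (\<xi> j) \<and> continuous_on K (\<eta> j)) \<and>
           (\<forall>\<zeta>. continuous_on K \<zeta> \<longrightarrow>
              (\<forall>x\<in>K. (\<Sum>j=1..m. theta n \<gamma> \<phi> (\<xi> j) (\<eta> j) \<zeta> x) = left_act a \<zeta> x)))"
proof -
  define S where "S = closure {x\<in>K. a x \<noteq> 0}"
  have ca: "continuous_on K a" and cS: "compact S" and SK: "S \<subseteq> K - branch_set K n \<gamma>"
    using assms(8) unfolding J0_def S_def mem_Collect_eq by blast+
  have sub: "\<And>x. x \<in> K \<Longrightarrow> a x \<noteq> 0 \<Longrightarrow> x \<in> S"
    unfolding S_def by (rule subsetD[OF closure_subset]) simp
  have contg: "\<And>i. i \<in> {1..n} \<Longrightarrow> continuous_on K (\<gamma> i)"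
    and gK: "\<And>i. i \<in> {1..n} \<Longrightarrow> \<gamma> i ` K \<subseteq> K"
    using assms(2) unfolding proper_contraction_def by blast+
  show ?thesis
  proof (cases "S = {}")
    case True
    then have a0: "\<forall>x\<in>K. a x = 0" using sub by blast
    show ?thesis
      apply (rule exI[of _ 1])
      apply (rule conjI, simp)
      apply (rule exI[of _ "\<lambda>_ _. 0"])
      apply (rule exI[of _ "\<lambda>_ _. 0"])
      using a0 by (simp add: theta_def right_act_def left_act_def)
  next
    case False
    have pair: "\<forall>p\<in>{(i,k). i\<in>{1..n} \<and> k\<in>{1..n} \<and> i\<noteq>k}. \<exists>d>0.
        (\<forall>x\<in>S. \<forall>y\<in>K. d \<le> max (dist (\<gamma> (fst p) y) x) (dist (\<gamma> (snd p) y) x))"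
    proof
      fix p assume p: "p \<in> {(i,k). i\<in>{1..n} \<and> k\<in>{1..n} \<and> i\<noteq>k}"
      obtain i k where pik: "p = (i,k)" and i: "i\<in>{1..n}" and k: "k\<in>{1..n}" and ik: "i\<noteq>k"
        using p by auto
      define G where "G = (\<lambda>q::'a\<times>'a. max (dist (\<gamma> i (snd q)) (fst q)) (dist (\<gamma> k (snd q)) (fst q)))"
      have cSK: "compact (S \<times> K)" using cS assms(1) by (simp add: compact_Times)
      have neSK: "S \<times> K \<noteq> {}" using False SK by auto
      have c1: "continuous_on (S \<times> K) (\<lambda>q. \<gamma> i (snd q))"
        by (rule continuous_on_compose2[OF contg[OF i]]) (auto intro: continuous_intros)
      have c2: "continuous_on (S \<times> K) (\<lambda>q. \<gamma> k (snd q))"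
        by (rule continuous_on_compose2[OF contg[OF k]]) (auto intro: continuous_intros)
      have cG: "continuous_on (S \<times> K) G"
        unfolding G_def by (intro continuous_intros c1 c2)
      obtain q where q: "q \<in> S \<times> K" and qmin: "\<forall>q'\<in>S \<times> K. G q \<le> G q'"
        using continuous_attains_inf[OF cSK neSK cG] by blast
      have "G q > 0"
      proof (rule ccontr)
        assume "\<not> G q > 0"
        then have "dist (\<gamma> i (snd q)) (fst q) = 0 \<and> dist (\<gamma> k (snd q)) (fst q) = 0"
          unfolding G_def by (smt (verit) zero_le_dist)
        then have e1: "\<gamma> i (snd q) = fst q" and e2: "\<gamma> k (snd q) = fst q" by auto
        have "fst q \<in> branch_set K n \<gamma>"
          unfolding branch_set_def using q SK i k ik e1 e2 by force
        then show False using q SK by auto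
      qed
      then show "\<exists>d>0. \<forall>x\<in>S. \<forall>y\<in>K. d \<le> max (dist (\<gamma> (fst p) y) x) (dist (\<gamma> (snd p) y) x)"
        using qmin unfolding G_def pik by force
    qed
    define PP where "PP = (\<lambda>p d. \<forall>x\<in>S. \<forall>y\<in>K. d \<le> max (dist (\<gamma> (fst p) y) x) (dist (\<gamma> (snd p) y) x))"
    have finI: "finite {(i,k). i\<in>{1..n} \<and> k\<in>{1..n} \<and> i\<noteq>k}"
      by (rule finite_subset[of _ "{1..n}\<times>{1..n}"]) auto
    have monoP: "\<And>p d d'. PP p d \<Longrightarrow> 0 < d' \<Longrightarrow> d' \<le> d \<Longrightarrow> PP p d'"
      unfolding PP_def by (blast intro: order_trans)
    have pair': "\<forall>p\<in>{(i,k). i\<in>{1..n} \<and> k\<in>{1..n} \<and> i\<noteq>k}. \<exists>d>0. PP p d"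
      using pair unfolding PP_def .
    obtain \<delta> where \<delta>: "\<delta> > 0" and sepP0: "\<forall>p\<in>{(i,k). i\<in>{1..n} \<and> k\<in>{1..n} \<and> i\<noteq>k}. PP p \<delta>"
      using finite_min_delta[OF finI pair'] monoP by blast
    have sepP: "\<forall>p\<in>{(i,k). i\<in>{1..n} \<and> k\<in>{1..n} \<and> i\<noteq>k}.
        (\<forall>x\<in>S. \<forall>y\<in>K. \<delta> \<le> max (dist (\<gamma> (fst p) y) x) (dist (\<gamma> (snd p) y) x))"
      using sepP0 unfolding PP_def .
    have sep: "\<And>i k x y. i\<in>{1..n} \<Longrightarrow> k\<in>{1..n} \<Longrightarrow> i \<noteq> k \<Longrightarrow> x \<in> S \<Longrightarrow> y \<in> K \<Longrightarrow>
        dist (\<gamma> k y) x < \<delta> \<Longrightarrow> dist (\<gamma> i y) x \<ge> \<delta>"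
    proof -
      fix i k x y assume h: "i\<in>{1..n}" "k\<in>{1..n}" "i \<noteq> k" "x \<in> S" "y \<in> K" "dist (\<gamma> k y) x < \<delta>"
      have "\<delta> \<le> max (dist (\<gamma> i y) x) (dist (\<gamma> k y) x)" using sepP h by auto
      then show "dist (\<gamma> i y) x \<ge> \<delta>" using h(6) by (auto simp: max_def split: if_splits)
    qed
    obtain T where T: "finite T" "T \<subseteq> S" "S \<subseteq> (\<Union>x\<in>T. ball x (\<delta>/3))"
      using seq_compact_imp_totally_bounded[OF compact_imp_seq_compact[OF cS]] \<delta>
      by (meson divide_pos_pos zero_less_numeral)
    have Tne: "T \<noteq> {}" using T False by auto
    obtain f where f: "bij_betw f {1..card T} T" using ex_bij_betw_nat_finite_1[OF T(1)] by blast
    define m where "m = card T"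
    have m1: "m \<ge> 1" unfolding m_def using T(1) Tne by (simp add: Suc_le_eq card_gt_0_iff)
    have fS: "\<And>j. j \<in> {1..m} \<Longrightarrow> f j \<in> S" using f T(2) unfolding m_def bij_betw_def by auto
    have cover: "\<And>x. x \<in> S \<Longrightarrow> \<exists>j\<in>{1..m}. dist (f j) x < \<delta>/3"
    proof -
      fix x assume "x \<in> S"
      then obtain t where t: "t \<in> T" "dist t x < \<delta>/3" using T(3) by auto
      then obtain j where "j \<in> {1..m}" "f j = t" using f unfolding m_def bij_betw_def by (metis atLeastAtMost_iff imageE)
      then show "\<exists>j\<in>{1..m}. dist (f j) x < \<delta>/3" using t by auto
    qed
    define \<rho> where "\<rho> = (\<lambda>j z. max 0 (\<delta>/2 - dist z (f j)))"
    define D where "D = (\<lambda>z. max (\<Sum>l=1..m. \<rho> l z) (\<delta>/6))"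
    define chi where "chi = (\<lambda>j z. min 1 (max 0 (2 - 2 * dist z (f j) / \<delta>)))"
    define \<xi> where "\<xi> = (\<lambda>j z. a z * complex_of_real (\<rho> j z / D z))"
    define \<eta> where "\<eta> = (\<lambda>j z. of_nat n * complex_of_real (chi j z))"
    have Dpos: "\<And>z. D z > 0" unfolding D_def using \<delta> by (simp add: less_max_iff_disj)
    show ?thesis
    proof (intro exI conjI ballI allI impI)
      show "1 \<le> m" by (rule m1)
    next
      fix j assume "j \<in> {1..m}"
      have cD: "continuous_on K D" unfolding D_def \<rho>_def by (intro continuous_intros)
      have cr: "continuous_on K (\<rho> j)" unfolding \<rho>_def by (intro continuous_intros)
      have "continuous_on K (\<lambda>z. \<rho> j z / D z)"
        by (rule continuous_on_divide[OF cr cD]) (use Dpos in \<open>metis order_less_irrefl\<close>)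
      then have c2: "continuous_on K (\<lambda>z. complex_of_real (\<rho> j z / D z))"
        by (rule continuous_on_of_real)
      show "continuous_on K (\<xi> j)" unfolding \<xi>_def
        by (rule continuous_on_mult[OF ca c2])
    next
      fix j assume "j \<in> {1..m}"
      show "continuous_on K (\<eta> j)" unfolding \<eta>_def chi_def
        using \<delta> by (intro continuous_intros) auto
    next
      fix \<zeta> :: "'a \<Rightarrow> complex" and x assume c\<zeta>: "continuous_on K \<zeta>" and x: "x \<in> K"
      have termj: "theta n \<gamma> \<phi> (\<xi> j) (\<eta> j) \<zeta> x = complex_of_real (\<rho> j x / D x) * a x * \<zeta> x"
        if j: "j \<in> {1..m}" for j
      proof (cases "\<rho> j x = 0")
        case True
        then show ?thesis by (simp add: theta_def right_act_def \<xi>_def)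
      next
        case False
        then have dx: "dist x (f j) < \<delta>/2" unfolding \<rho>_def by (auto simp: max_def split: if_splits)
        obtain k y where k: "k \<in> {1..n}" and y: "y \<in> K" and xy: "x = \<gamma> k y"
          using x assms(3) by blast
        have phx: "\<phi> x = y" using assms(6) k y xy by auto
        have n1: "n \<ge> 1" using k by auto
        have chik: "chi j (\<gamma> k y) = 1" unfolding chi_def using dx xy \<delta>
          by (auto simp: min_def max_def field_simps)
        have chii: "chi j (\<gamma> i y) = 0" if i: "i \<in> {1..n}" "i \<noteq> k" for i
        proof -
          have "dist (\<gamma> k y) (f j) < \<delta>" using dx xy \<delta> by simp
          then have "dist (\<gamma> i y) (f j) \<ge> \<delta>" using sep[OF i(1) k i(2) fS[OF j] y] by blast
          then show ?thesis unfolding chi_def using \<delta> by (auto simp: min_def max_def field_simps)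
        qed
        have "(\<Sum>i=1..n. cnj (\<eta> j (\<gamma> i y)) * \<zeta> (\<gamma> i y))
              = cnj (\<eta> j (\<gamma> k y)) * \<zeta> (\<gamma> k y)"
        proof -
          have "(\<Sum>i=1..n. cnj (\<eta> j (\<gamma> i y)) * \<zeta> (\<gamma> i y))
              = cnj (\<eta> j (\<gamma> k y)) * \<zeta> (\<gamma> k y)
                + (\<Sum>i\<in>{1..n}-{k}. cnj (\<eta> j (\<gamma> i y)) * \<zeta> (\<gamma> i y))"
            by (rule sum.remove) (use k in auto)
          also have "(\<Sum>i\<in>{1..n}-{k}. cnj (\<eta> j (\<gamma> i y)) * \<zeta> (\<gamma> i y)) = 0"
            by (rule sum.neutral) (auto simp: \<eta>_def chii)
          finally show ?thesis by simp
        qed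
        also have "\<dots> = of_nat n * \<zeta> x" using chik xy by (simp add: \<eta>_def)
        finally have sumeq: "(\<Sum>i=1..n. cnj (\<eta> j (\<gamma> i y)) * \<zeta> (\<gamma> i y)) = of_nat n * \<zeta> x" .
        have "inner_A n \<gamma> (\<eta> j) \<zeta> (\<phi> x) = \<zeta> x"
          unfolding inner_A_def phx sumeq using n1 by simp
        then show ?thesis by (simp add: theta_def right_act_def \<xi>_def)
      qed
      have "(\<Sum>j=1..m. theta n \<gamma> \<phi> (\<xi> j) (\<eta> j) \<zeta> x)
          = (\<Sum>j=1..m. complex_of_real (\<rho> j x / D x) * a x * \<zeta> x)"
        by (rule sum.cong) (simp_all add: termj)
      also have "\<dots> = complex_of_real ((\<Sum>j=1..m. \<rho> j x) / D x) * a x * \<zeta> x"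
        by (simp add: sum_distrib_right sum_divide_distrib)
      also have "\<dots> = left_act a \<zeta> x"
      proof (cases "a x = 0")
        case True
        then show ?thesis by (simp add: left_act_def)
      next
        case False
        then have "x \<in> S" using sub x by blast
        then obtain j0 where j0: "j0 \<in> {1..m}" "dist (f j0) x < \<delta>/3" using cover by blast
        have "\<rho> j0 x > \<delta>/6" using j0(2) unfolding \<rho>_def by (simp add: dist_commute max_def)
        moreover have "\<rho> j0 x \<le> (\<Sum>l=1..m. \<rho> l x)"
          by (rule member_le_sum) (use j0 in \<open>auto simp: \<rho>_def\<close>)
        ultimately have "(\<Sum>l=1..m. \<rho> l x) > \<delta>/6" by linarith
        then have "D x = (\<Sum>l=1..m. \<rho> l x)" unfolding D_def by simp
        then have "(\<Sum>j=1..m. \<rho> j x) / D x = 1" using Dpos[of x] by simp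
        then show ?thesis by (simp add: left_act_def)
      qed
      finally show "(\<Sum>j=1..m. theta n \<gamma> \<phi> (\<xi> j) (\<eta> j) \<zeta> x) = left_act a \<zeta> x" .
    qed
  qed
qed

end
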